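(* For the Hawaiian earring $\mathcal X$, $|\mathfrak P^\omega(\mathcal X)|=\omega$.
   Context: $\mathcal X=\bigcup_{n\in\mathbb N}C_n$ with $C_n=\{(x,y)\in\mathbb R^2: x^2+(y-\tfrac1n)^2=\tfrac1{n^2}\}$, base point $0$. $\omega=|\mathbb N|$. An $\omega$-loop at $0$ is a continuous $k:[0,1]\to\mathcal X$ with $k(0)=k(1)=0$ all of whose fibres are finite; $\mathfrak P^\omega(\mathcal X)$ is the subgroup of $\pi_1(\mathcal X,0)$ generated by homotopy classes (rel endpoints) of $\omega$-loops at $0$. *)

theory Defs
  imports "HOL-Analysis.Analysis"
begin

definition hawaiian_earring :: "(real \<times> real) set" where
  "hawaiian_earring = (\<Union>n\<in>{1::nat..}. {(x, y). x^2 + (y - 1 / real n)^2 = 1 / (real n)^2})"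

definition omega_loop :: "(real \<Rightarrow> real \<times> real) \<Rightarrow> bool" where
  "omega_loop k \<longleftrightarrow> path k \<and> path_image k \<subseteq> hawaiian_earring \<and>
     pathstart k = 0 \<and> pathfinish k = 0 \<and>
     (\<forall>p. finite {t\<in>{0..1}. k t = p})"

text \<open>Loops at 0 representing elements of the subgroup of pi_1 generated by classes of omega-loops:
  the identity, the generators, inverses and products.\<close>
inductive_set omega_generated :: "(real \<Rightarrow> real \<times> real) set" where
  const: "(\<lambda>t. 0) \<in> omega_generated"
| gen: "omega_loop k \<Longrightarrow> k \<in> omega_generated"
| rev: "g \<in> omega_generated \<Longrightarrow> reversepath g \<in> omega_generated"
| join: "g \<in> omega_generated \<Longrightarrow> h \<in> omega_generated \<Longrightarrow> g +++ h \<in> omega_generated"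

definition P_omega :: "(real \<Rightarrow> real \<times> real) set set" where
  "P_omega = (\<lambda>g. {h. homotopic_paths hawaiian_earring g h}) ` omega_generated"

end

theory Submission
  imports Defs "HOL-Complex_Analysis.Complex_Analysis" "HOL-Library.Countable"
begin


lemma circle_loop:
  fixes \<gamma> :: "real \<Rightarrow> complex" and c :: complex and r \<theta> :: real
  assumes "path \<gamma>" "path_image \<gamma> \<subseteq> sphere c r" "r > 0"
    "pathstart \<gamma> = c + complex_of_real r * exp(\<i> * complex_of_real \<theta>)"
    "pathfinish \<gamma> = c + complex_of_real r * exp(\<i> * complex_of_real \<theta>)"
  shows "\<exists>j::int. homotopic_paths (sphere c r) \<gamma>
     (\<lambda>t. c + complex_of_real r * exp (\<i> * complex_of_real (\<theta> + 2 * pi * real_of_int j * t)))"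
proof -
  have sph: "norm (\<gamma> t - c) = r" if "t \<in> {0..1}" for t
  proof -
    have "\<gamma> t \<in> sphere c r" using assms(2) that by (auto simp: path_image_def image_subset_iff)
    then show ?thesis by (simp add: dist_norm norm_minus_commute)
  qed
  have nz: "\<gamma> t - c \<noteq> 0" if "t \<in> {0..1}" for t
    using sph[OF that] \<open>r > 0\<close> by auto
  have cont: "continuous_on {0..1} (\<lambda>t. \<gamma> t - c)"
    using assms(1) by (auto simp: path_def intro!: continuous_intros)
  have "contractible {0..1::real}"
    by (rule convex_imp_contractible) (simp add: convex_real_interval)
  then obtain g where g: "continuous_on {0..1} g" "\<And>t. t \<in> {0..1} \<Longrightarrow> \<gamma> t - c = exp (g t)"
    using continuous_logarithm_on_contractible[OF cont _ nz] by metis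
  have Reg: "Re (g t) = ln r" if "t \<in> {0..1}" for t
  proof -
    have "exp (Re (g t)) = r" using sph[OF that] g(2)[OF that] by (simp add: norm_exp_eq_Re)
    then show ?thesis by (metis ln_exp)
  qed
  have eb: "exp (g t) = exp (complex_of_real (ln r) + \<i> * complex_of_real \<theta>)"
    if "t = 0 \<or> t = 1" for t
  proof -
    have "exp (g t) = \<gamma> t - c" using g(2) that by auto
    also have "\<dots> = complex_of_real r * exp(\<i> * complex_of_real \<theta>)"
      using assms(4,5) that by (auto simp: pathstart_def pathfinish_def)
    also have "\<dots> = exp (complex_of_real (ln r) + \<i> * complex_of_real \<theta>)"
      using \<open>r > 0\<close> by (simp add: exp_add exp_of_real)
    finally show ?thesis .
  qed
  obtain n0 :: int where n0: "g 0 = complex_of_real (ln r) + \<i> * complex_of_real \<theta> + (of_int (2 * n0) * pi) * \<i>"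
    using eb[of 0] by (auto simp: exp_eq)
  obtain n1 :: int where n1: "g 1 = complex_of_real (ln r) + \<i> * complex_of_real \<theta> + (of_int (2 * n1) * pi) * \<i>"
    using eb[of 1] by (auto simp: exp_eq)
  define j where "j = n1 - n0"
  define gl where "gl = (\<lambda>t::real. g 0 + 2 * pi * \<i> * of_int j * complex_of_real t)"
  define L where "L = {z. Re z = ln r}"
  have convL: "convex L"
    unfolding convex_def L_def by (auto simp: algebra_simps) (metis distrib_right mult_1)
  have "homotopic_paths L g gl"
  proof (rule homotopic_paths_linear)
    show "path g" using g(1) by (simp add: path_def)
    show "path gl" unfolding gl_def path_def by (intro continuous_intros)
    show "pathstart gl = pathstart g" by (simp add: gl_def pathstart_def)
    show "pathfinish gl = pathfinish g"
      by (simp add: gl_def pathfinish_def n0 n1 j_def algebra_simps)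
    show "closed_segment (g t) (gl t) \<subseteq> L" if "t \<in> {0..1}" for t
    proof (rule convex_contains_segment[THEN iffD1, OF convL, rule_format])
      show "g t \<in> L" using Reg[OF that] by (simp add: L_def)
      show "gl t \<in> L" using Reg[of 0] by (simp add: L_def gl_def)
    qed
  qed
  then have h1: "homotopic_paths (sphere c r) ((\<lambda>z. c + exp z) \<circ> g) ((\<lambda>z. c + exp z) \<circ> gl)"
  proof (rule homotopic_paths_continuous_image)
    show "continuous_on L (\<lambda>z. c + exp z)" by (intro continuous_intros)
    show "(\<lambda>z. c + exp z) \<in> L \<rightarrow> sphere c r"
      using \<open>r > 0\<close> by (auto simp: L_def dist_norm norm_exp_eq_Re)
  qed
  have h0: "homotopic_paths (sphere c r) \<gamma> ((\<lambda>z. c + exp z) \<circ> g)"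
    using assms(1,2) by (intro homotopic_paths_eq) (auto simp: g(2)[symmetric])
  have eq: "(\<lambda>z. c + exp z) \<circ> gl =
     (\<lambda>t. c + complex_of_real r * exp (\<i> * complex_of_real (\<theta> + 2 * pi * real_of_int j * t)))"
  proof
    fix t
    have "exp (g 0) = complex_of_real r * exp(\<i> * complex_of_real \<theta>)"
      using eb[of 0] \<open>r>0\<close> by (simp add: exp_add exp_of_real)
    then show "((\<lambda>z. c + exp z) \<circ> gl) t = c + complex_of_real r * exp (\<i> * complex_of_real (\<theta> + 2 * pi * real_of_int j * t))"
      by (simp add: gl_def algebra_simps) (simp add: exp_add)
  qed
  show ?thesis using homotopic_paths_trans[OF h0 h1] eq by metis
qed



definition cpx :: "real \<times> real \<Rightarrow> complex" where
  "cpx = (\<lambda>p. complex_of_real (fst p) + \<i> * complex_of_real (snd p))"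
definition pr2 :: "complex \<Rightarrow> real \<times> real" where "pr2 = (\<lambda>z. (Re z, Im z))"

lemma pr2_cpx [simp]: "pr2 (cpx p) = p" by (simp add: pr2_def cpx_def)
lemma cpx_pr2 [simp]: "cpx (pr2 z) = z" by (simp add: pr2_def cpx_def complex_eq_iff)
lemma cont_cpx: "continuous_on S cpx" unfolding cpx_def by (intro continuous_intros)
lemma cont_pr2: "continuous_on S pr2" unfolding pr2_def by (intro continuous_intros)

definition Cn :: "nat \<Rightarrow> (real \<times> real) set" where
  "Cn n = {(x, y). x^2 + (y - 1 / real n)^2 = 1 / (real n)^2}"

lemma X_iff: "p \<in> hawaiian_earring \<longleftrightarrow> (\<exists>n\<ge>1. p \<in> Cn n)"
  by (auto simp: hawaiian_earring_def Cn_def)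

lemma zero_Cn [simp]: "0 \<in> Cn n"
  by (simp add: Cn_def zero_prod_def power2_eq_square)

lemma zero_X: "0 \<in> hawaiian_earring"
  using X_iff zero_Cn by blast

definition cen :: "nat \<Rightarrow> complex" where "cen n = \<i> * complex_of_real (1 / real n)"

lemma dist_cen: "dist (cen n) z = sqrt ((Re z)^2 + (Im z - 1 / real n)^2)"
  by (simp add: dist_norm cen_def cmod_def power2_eq_square algebra_simps)

lemma sphere_iff: "n \<ge> 1 \<Longrightarrow> z \<in> sphere (cen n) (1 / real n) \<longleftrightarrow> pr2 z \<in> Cn n"
proof -
  assume n: "n \<ge> 1"
  have "z \<in> sphere (cen n) (1 / real n) \<longleftrightarrow> sqrt ((Re z)^2 + (Im z - 1 / real n)^2) = sqrt ((1/real n)^2)"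
    using n by (simp add: dist_cen)
  also have "\<dots> \<longleftrightarrow> (Re z)^2 + (Im z - 1 / real n)^2 = (1/real n)^2" by (rule real_sqrt_eq_iff)
  finally show ?thesis by (simp add: pr2_def Cn_def power_divide)
qed

lemma cpx_Cn: "n \<ge> 1 \<Longrightarrow> cpx \<in> Cn n \<rightarrow> sphere (cen n) (1 / real n)"
  using sphere_iff by auto

lemma pr2_sphere: "n \<ge> 1 \<Longrightarrow> pr2 \<in> sphere (cen n) (1 / real n) \<rightarrow> Cn n"
  using sphere_iff by auto

definition circ :: "nat \<Rightarrow> int \<Rightarrow> real \<Rightarrow> complex" where
  "circ n j = (\<lambda>t. cen n + complex_of_real (1 / real n) * exp (\<i> * complex_of_real (- pi / 2 + 2 * pi * real_of_int j * t)))"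

datatype tm = C | L nat int | R tm | J tm tm

instance tm :: countable by countable_datatype

fun ev :: "tm \<Rightarrow> real \<Rightarrow> real \<times> real" where
  "ev C = (\<lambda>t. 0)"
| "ev (L n j) = pr2 \<circ> circ n j"
| "ev (R u) = reversepath (ev u)"
| "ev (J u v) = ev u +++ ev v"

lemma exp_mhalf: "exp (\<i> * complex_of_real (- pi / 2)) = - \<i>"
proof -
  have "cis (- pi / 2) = - \<i>" by (simp add: complex_eq_iff)
  then show ?thesis by (metis cis_conv_exp)
qed

lemma pair_circle:
  assumes n: "n \<ge> 1" and p: "path p" "path_image p \<subseteq> Cn n" "pathstart p = 0" "pathfinish p = 0"
  shows "\<exists>j. homotopic_paths (Cn n) p (ev (L n j))"
proof -
  have st: "cen n + complex_of_real (1 / real n) * exp (\<i> * complex_of_real (- pi / 2)) = 0"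
    by (simp only: exp_mhalf) (simp add: cen_def)
  have "path (cpx \<circ> p)" using p(1) by (intro path_continuous_image cont_cpx)
  moreover have "path_image (cpx \<circ> p) \<subseteq> sphere (cen n) (1 / real n)"
    using p(2) cpx_Cn[OF n] by (auto simp: path_image_compose)
  moreover have "pathstart (cpx \<circ> p) = cen n + complex_of_real (1 / real n) * exp (\<i> * complex_of_real (- pi / 2))"
    "pathfinish (cpx \<circ> p) = cen n + complex_of_real (1 / real n) * exp (\<i> * complex_of_real (- pi / 2))"
    using p(3,4) st by (auto simp: pathstart_compose pathfinish_compose cpx_def zero_prod_def)
  ultimately obtain j where j: "homotopic_paths (sphere (cen n) (1 / real n)) (cpx \<circ> p) (circ n j)"
    using circle_loop[of "cpx \<circ> p" "cen n" "1 / real n" "- pi / 2"] n unfolding circ_def by auto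
  have "homotopic_paths (Cn n) (pr2 \<circ> (cpx \<circ> p)) (pr2 \<circ> circ n j)"
    by (rule homotopic_paths_continuous_image[OF j cont_pr2 pr2_sphere[OF n]])
  moreover have "pr2 \<circ> (cpx \<circ> p) = p" by (simp add: o_def)
  ultimately show ?thesis by auto
qed



definition ff :: "real \<times> real \<Rightarrow> real" where
  "ff = (\<lambda>p. 2 * snd p / ((fst p)^2 + (snd p)^2))"

lemma ff_Cn:
  assumes "n \<ge> 1" "p \<in> Cn n" "p \<noteq> 0"
  shows "ff p = real n \<and> (fst p)^2 + (snd p)^2 \<noteq> 0"
proof -
  obtain x y where p: "p = (x, y)" by fastforce
  have e: "x^2 + (y - 1 / real n)^2 = 1 / (real n)^2" using assms(2) p by (simp add: Cn_def)
  have n0: "real n > 0" using assms(1) by simp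
  have e2: "x^2 + y^2 = 2 * y / real n"
  proof -
    have "(y - 1/real n)^2 = y^2 - 2*y/real n + 1/(real n)^2"
      by (simp add: power2_diff power_divide field_simps)
    then show ?thesis using e by linarith
  qed
  have "y \<noteq> 0"
  proof
    assume "y = 0"
    then have "x = 0" using e2 by simp
    then show False using assms(3) p \<open>y = 0\<close> by (simp add: zero_prod_def)
  qed
  then have ne: "x^2 + y^2 \<noteq> 0" by (simp add: add_nonneg_eq_0_iff)
  have "ff p = 2 * y / (2 * y / real n)" using e2 p by (simp add: ff_def)
  also have "\<dots> = real n" using \<open>y \<noteq> 0\<close> n0 by simp
  finally show ?thesis using ne p by simp
qed

lemma single_circle:
  assumes k: "path k" "path_image k \<subseteq> hawaiian_earring"
    and ab: "0 \<le> a" "a < b" "b \<le> 1" "k a = 0" "k b = 0"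
    and nz: "\<And>t. a < t \<Longrightarrow> t < b \<Longrightarrow> k t \<noteq> 0"
  shows "\<exists>n\<ge>1. k ` {a..b} \<subseteq> Cn n"
proof -
  define S where "S = {a<..<b}"
  have kX: "k t \<in> hawaiian_earring" if "t \<in> {0..1}" for t
    using k(2) that by (auto simp: path_image_def)
  have kS: "\<exists>n\<ge>1. k t \<in> Cn n \<and> ff (k t) = real n \<and> (fst (k t))^2 + (snd (k t))^2 \<noteq> 0"
    if "t \<in> S" for t
  proof -
    have "t \<in> {0..1}" using that ab by (auto simp: S_def)
    then obtain n where "n \<ge> 1" "k t \<in> Cn n" using kX X_iff by blast
    moreover have "k t \<noteq> 0" using nz that by (auto simp: S_def)
    ultimately show ?thesis using ff_Cn by blast
  qed
  have contk: "continuous_on S k"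
    using k(1) ab by (auto simp: path_def S_def intro: continuous_on_subset)
  have contf: "continuous_on S (ff \<circ> k)"
    unfolding ff_def o_def
    apply (intro continuous_intros continuous_on_compose2[OF contk] order_refl)
    using kS by auto
  have "(ff \<circ> k) constant_on S"
  proof (rule continuous_discrete_range_constant[OF _ contf])
    show "connected S" by (simp add: S_def)
    fix x assume x: "x \<in> S"
    show "\<exists>e>0. \<forall>y. y \<in> S \<and> (ff \<circ> k) y \<noteq> (ff \<circ> k) x \<longrightarrow> e \<le> norm ((ff \<circ> k) y - (ff \<circ> k) x)"
    proof (intro exI[of _ 1] conjI allI impI)
      fix y assume y: "y \<in> S \<and> (ff \<circ> k) y \<noteq> (ff \<circ> k) x"
      obtain m where m: "ff (k x) = real m" using kS x by blast
      obtain m' where m': "ff (k y) = real m'" using kS y by blast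
      have "m \<noteq> m'" using y m m' by auto
      then show "1 \<le> norm ((ff \<circ> k) y - (ff \<circ> k) x)" using m m' by auto
    qed simp
  qed
  then obtain v where v: "\<And>t. t \<in> S \<Longrightarrow> ff (k t) = v" by (auto simp: constant_on_def)
  have mid: "(a + b) / 2 \<in> S" using ab by (simp add: S_def)
  obtain n where n: "n \<ge> 1" "k ((a + b) / 2) \<in> Cn n" "ff (k ((a + b) / 2)) = real n"
    using kS[OF mid] by blast
  have "k t \<in> Cn n" if "t \<in> {a..b}" for t
  proof (cases "t = a \<or> t = b")
    case True then show ?thesis using ab by auto
  next
    case False
    then have t: "t \<in> S" using that by (auto simp: S_def)
    obtain m where "m \<ge> 1" "k t \<in> Cn m" "ff (k t) = real m" using kS[OF t] by blast
    moreover have "ff (k t) = real n" using v[OF t] v[OF mid] n(3) by simp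
    ultimately show ?thesis by simp
  qed
  then show ?thesis using n(1) by blast
qed

lemma seg_lemma:
  assumes k: "path k" "path_image k \<subseteq> hawaiian_earring" and fin: "finite {t\<in>{0..1}. k t = 0}"
  shows "card {t. a < t \<and> t < b \<and> k t = 0} = N \<Longrightarrow> 0 \<le> a \<Longrightarrow> a < b \<Longrightarrow> b \<le> 1 \<Longrightarrow> k a = 0 \<Longrightarrow> k b = 0
     \<Longrightarrow> \<exists>u. homotopic_paths hawaiian_earring (subpath a b k) (ev u)"
proof (induction N arbitrary: a b rule: less_induct)
  case (less N a b)
  show ?case
  proof (cases "\<exists>c. a < c \<and> c < b \<and> k c = 0")
    case True
    then obtain c where c: "a < c" "c < b" "k c = 0" by blast
    let ?Z = "{t. a < t \<and> t < b \<and> k t = 0}"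
    have finZ: "finite ?Z"
      by (rule finite_subset[OF _ fin]) (use less.prems in auto)
    have l1: "card {t. a < t \<and> t < c \<and> k t = 0} < N"
      unfolding less.prems(1)[symmetric]
      by (rule psubset_card_mono[OF finZ]) (use c in auto)
    have l2: "card {t. c < t \<and> t < b \<and> k t = 0} < N"
      unfolding less.prems(1)[symmetric]
      by (rule psubset_card_mono[OF finZ]) (use c in auto)
    obtain u1 where u1: "homotopic_paths hawaiian_earring (subpath a c k) (ev u1)"
      using less.IH[OF l1 refl] less.prems c by auto
    obtain u2 where u2: "homotopic_paths hawaiian_earring (subpath c b k) (ev u2)"
      using less.IH[OF l2 refl] less.prems c by auto
    have "homotopic_paths hawaiian_earring (subpath a c k +++ subpath c b k) (subpath a b k)"
      by (rule homotopic_join_subpaths1[OF k]) (use less.prems c in auto)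
    moreover have "homotopic_paths hawaiian_earring (subpath a c k +++ subpath c b k) (ev u1 +++ ev u2)"
      by (rule homotopic_paths_join[OF u1 u2]) simp
    ultimately have "homotopic_paths hawaiian_earring (subpath a b k) (ev (J u1 u2))"
      by (metis ev.simps(4) homotopic_paths_sym homotopic_paths_trans)
    then show ?thesis by blast
  next
    case False
    then obtain n where n: "n \<ge> 1" "k ` {a..b} \<subseteq> Cn n"
      using single_circle[OF k, of a b] less.prems by blast
    have "path (subpath a b k)" using k(1) less.prems by (intro path_subpath) auto
    moreover have "path_image (subpath a b k) \<subseteq> Cn n"
      using n less.prems by (simp add: path_image_subpath closed_segment_eq_real_ivl)
    moreover have "pathstart (subpath a b k) = 0" "pathfinish (subpath a b k) = 0"
      using less.prems by simp_all
    ultimately obtain j where j: "homotopic_paths (Cn n) (subpath a b k) (ev (L n j))"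
      using pair_circle[OF n(1)] by blast
    have "Cn n \<subseteq> hawaiian_earring" using n X_iff by blast
    then show ?thesis using homotopic_paths_subset[OF j] by blast
  qed
qed

lemma omega_hom:
  "g \<in> omega_generated \<Longrightarrow> pathstart g = 0 \<and> pathfinish g = 0 \<and> (\<exists>u. homotopic_paths hawaiian_earring g (ev u))"
proof (induction rule: omega_generated.induct)
  case const
  have "homotopic_paths hawaiian_earring (\<lambda>t. 0) (ev C)"
    using zero_X by (simp add: homotopic_paths_refl path_def path_image_def image_subset_iff)
  then show ?case unfolding pathstart_def pathfinish_def by blast
next
  case (gen k)
  then have k: "path k" "path_image k \<subseteq> hawaiian_earring" "pathstart k = 0" "pathfinish k = 0"
     "finite {t\<in>{0..1}. k t = 0}"
    unfolding omega_loop_def by blast+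
  have "\<exists>u. homotopic_paths hawaiian_earring (subpath 0 1 k) (ev u)"
    using seg_lemma[OF k(1,2,5) refl, of 0 1] k(3,4) by (simp add: pathstart_def pathfinish_def)
  then show ?case using k by simp
next
  case (rev g)
  then obtain u where "homotopic_paths hawaiian_earring g (ev u)" by blast
  then have "homotopic_paths hawaiian_earring (reversepath g) (ev (R u))"
    by (simp add: homotopic_paths_reversepath_D)
  then have "\<exists>u. homotopic_paths hawaiian_earring (reversepath g) (ev u)" by blast
  then show ?case using rev by simp
next
  case (join g h)
  then obtain u v where "homotopic_paths hawaiian_earring g (ev u)" "homotopic_paths hawaiian_earring h (ev v)" by blast
  then have "homotopic_paths hawaiian_earring (g +++ h) (ev (J u v))"
    using join by (simp add: homotopic_paths_join)
  then have "\<exists>u. homotopic_paths hawaiian_earring (g +++ h) (ev u)" by blast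
  then show ?case using join by simp
qed

lemma P_countable: "countable P_omega"
proof -
  have "P_omega \<subseteq> range (\<lambda>u. {h. homotopic_paths hawaiian_earring (ev u) h})"
  proof
    fix A assume "A \<in> P_omega"
    then obtain g where g: "g \<in> omega_generated" "A = {h. homotopic_paths hawaiian_earring g h}"
      by (auto simp: P_omega_def)
    then obtain u where u: "homotopic_paths hawaiian_earring g (ev u)" using omega_hom by blast
    have "A = {h. homotopic_paths hawaiian_earring (ev u) h}"
      using g(2) u by (auto intro: homotopic_paths_trans homotopic_paths_sym)
    then show "A \<in> range (\<lambda>u. {h. homotopic_paths hawaiian_earring (ev u) h})" by blast
  qed
  then show ?thesis by (rule countable_subset) simp
qed



lemma dist_rot: "dist c (c + complex_of_real r * exp (\<i> * complex_of_real x)) = \<bar>r\<bar>"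
  by (simp add: dist_norm norm_mult)

lemma circ_sphere: "n \<ge> 1 \<Longrightarrow> circ n j t \<in> sphere (cen n) (1 / real n)"
  unfolding circ_def mem_sphere by (simp only: dist_rot) simp

lemma path_circ: "path (circ n j)"
  unfolding circ_def path_def by (intro continuous_intros)

lemma circ_0: "circ n 1 0 = 0"
proof -
  have "- pi / 2 + 2 * pi * real_of_int 1 * 0 = - pi / 2" by simp
  then show ?thesis unfolding circ_def by (simp only: exp_mhalf) (simp add: cen_def)
qed

lemma circ_1: "circ n 1 1 = 0"
proof -
  have "exp (\<i> * complex_of_real (- pi / 2 + 2 * pi * real_of_int 1 * 1)) = exp (\<i> * complex_of_real (- pi / 2)) * exp (2 * complex_of_real pi * \<i>)"
  proof -
    have "\<i> * complex_of_real (- pi / 2 + 2 * pi * real_of_int 1 * 1) = \<i> * complex_of_real (- pi / 2) + 2 * complex_of_real pi * \<i>"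
      by (simp add: algebra_simps)
    then show ?thesis by (simp only: exp_add)
  qed
  then have e: "exp (\<i> * complex_of_real (- pi / 2 + 2 * pi * real_of_int 1 * 1)) = - \<i>"
    by (simp only: exp_mhalf exp_two_pi_i mult_1_right)
  show ?thesis unfolding circ_def by (simp only: e) (simp add: cen_def)
qed

lemma circ_shift: "circ n 1 = shiftpath (3/4) (circlepath (cen n) (1 / real n))"
proof
  fix x
  have a: "circ n 1 x = circlepath (cen n) (1 / real n) (x - 1/4)"
    by (simp add: circ_def circlepath algebra_simps)
  have b: "circlepath (cen n) (1 / real n) (3/4 + x) = circlepath (cen n) (1 / real n) (x - 1/4)"
    using circlepath_add1[of "cen n" "1 / real n" "x - 1/4"] by (simp add: algebra_simps)
  show "circ n 1 x = shiftpath (3/4) (circlepath (cen n) (1 / real n)) x"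
    using a b by (simp add: shiftpath_def algebra_simps)
qed

lemma pr2_inj: "pr2 z = pr2 w \<Longrightarrow> z = w"
  by (simp add: pr2_def complex_eq_iff)

lemma ell_omega: assumes n: "n \<ge> 1" shows "omega_loop (pr2 \<circ> circ n 1)"
  unfolding omega_loop_def
proof (intro conjI allI)
  show "path (pr2 \<circ> circ n 1)" by (intro path_continuous_image path_circ cont_pr2)
  show "path_image (pr2 \<circ> circ n 1) \<subseteq> hawaiian_earring"
    unfolding path_image_def image_subset_iff o_def
    using circ_sphere[OF n] sphere_iff[OF n] n X_iff by blast
  show "pathstart (pr2 \<circ> circ n 1) = 0" by (simp add: pathstart_def circ_0 pr2_def zero_prod_def)
  show "pathfinish (pr2 \<circ> circ n 1) = 0" by (simp add: pathfinish_def circ_1 pr2_def zero_prod_def)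
  fix p
  show "finite {t \<in> {0..1}. (pr2 \<circ> circ n 1) t = p}"
  proof (cases "{t \<in> {0..1}. (pr2 \<circ> circ n 1) t = p} = {}")
    case True then show ?thesis by (metis finite.emptyI)
  next
    case False
    then obtain s where s: "s \<in> {0..1}" "pr2 (circ n 1 s) = p" by auto
    have "{t \<in> {0..1}. (pr2 \<circ> circ n 1) t = p} \<subseteq> {s - 1, s, s + 1}"
    proof
      fix t assume t: "t \<in> {t \<in> {0..1}. (pr2 \<circ> circ n 1) t = p}"
      then have "circ n 1 t = circ n 1 s" using s by (auto intro: pr2_inj)
      then have "exp (\<i> * complex_of_real (- pi / 2 + 2 * pi * real_of_int 1 * t)) =
                 exp (\<i> * complex_of_real (- pi / 2 + 2 * pi * real_of_int 1 * s))"
        using n by (simp add: circ_def)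
      then obtain m :: int where m: "\<i> * complex_of_real (- pi / 2 + 2 * pi * t) =
          \<i> * complex_of_real (- pi / 2 + 2 * pi * s) + (of_int (2 * m) * pi) * \<i>"
        by (auto simp: exp_eq)
      have "Im (\<i> * complex_of_real (- pi / 2 + 2 * pi * t)) =
          Im (\<i> * complex_of_real (- pi / 2 + 2 * pi * s) + (of_int (2 * m) * pi) * \<i>)"
        using m by simp
      then have "- pi / 2 + 2 * pi * t = - pi / 2 + 2 * pi * s + 2 * m * pi" by simp
      then have "2 * pi * t = 2 * pi * (s + m)" by (simp add: algebra_simps)
      then have tm: "t = s + m" by simp
      have "m \<le> 1" "m \<ge> -1" using t s tm by auto
      then have "m = -1 \<or> m = 0 \<or> m = 1" by auto
      then show "t \<in> {s - 1, s, s + 1}" using tm by auto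
    qed
    then show ?thesis by (rule finite_subset) simp
  qed
qed



lemma not_X_point:
  assumes n: "n \<ge> 1" and X: "(0, y) \<in> hawaiian_earring" and y: "y = 1 / real n + 1 / real (n + 1)"
  shows False
proof -
  obtain k where k: "k \<ge> 1" "(0, y) \<in> Cn k" using X X_iff by blast
  have e: "(y - 1 / real k)^2 = 1 / (real k)^2" using k by (simp add: Cn_def)
  have "(y - 1/real k)^2 = y^2 - 2*y/real k + 1/(real k)^2"
    by (simp add: power2_diff power_divide field_simps)
  then have "y * y = 2 * y / real k" using e by (simp add: power2_eq_square)
  moreover have "y > 0" using y n by (simp add: add_pos_pos)
  ultimately have "y * (y - 2 / real k) = 0" by (simp add: right_diff_distrib)
  then have yk: "y = 2 / real k" using \<open>y > 0\<close> by simp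
  have a: "1 / real (n + 1) < 1 / real n" using n by (simp add: frac_less2)
  show False
  proof (cases "k \<le> n")
    case True
    then have "2 / real n \<le> 2 / real k" using k by (simp add: frac_le)
    moreover have "2 / real n = 1 / real n + 1 / real n" by simp
    ultimately show False using yk y a by linarith
  next
    case False
    then have "2 / real k \<le> 2 / real (n + 1)" using k n by (intro frac_le) auto
    moreover have "2 / real (n+1) = 1 / real (n+1) + 1 / real (n+1)" by simp
    ultimately show False using yk y a by linarith
  qed
qed



lemma distinct_ell:
  assumes n: "n \<ge> 1" and nm: "n < m"
  shows "\<not> homotopic_paths hawaiian_earring (pr2 \<circ> circ n 1) (pr2 \<circ> circ m 1)"
proof
  assume h: "homotopic_paths hawaiian_earring (pr2 \<circ> circ n 1) (pr2 \<circ> circ m 1)"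
  define y where "y = 1 / real n + 1 / real (n + 1)"
  define w where "w = \<i> * complex_of_real y"
  have m1: "m \<ge> 1" using n nm by simp
  have a: "1 / real (n + 1) < 1 / real n" using n by (simp add: frac_less2)
  have b: "1 / real m \<le> 1 / real (n + 1)" using nm by (intro frac_le) auto
  have yp: "y > 0" using n by (simp add: y_def add_pos_pos)
  have "cpx \<in> hawaiian_earring \<rightarrow> - {w}"
  proof
    fix p assume p: "p \<in> hawaiian_earring"
    show "cpx p \<in> - {w}"
    proof
      assume "cpx p \<in> {w}"
      then have "pr2 (cpx p) = pr2 w" by simp
      then have "p = pr2 w" by simp
      also have "pr2 w = (0, y)" by (simp add: pr2_def w_def)
      finally have "p = (0, y)" .
      then show False using not_X_point[OF n _ y_def] p by simp
    qed
  qed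
  from homotopic_paths_continuous_image[OF h cont_cpx this]
  have "homotopic_paths (- {w}) (circ n 1) (circ m 1)" by (simp add: o_def)
  then have eqw: "winding_number (circ n 1) w = winding_number (circ m 1) w"
    by (rule winding_number_homotopic_paths)
  have "winding_number (circ m 1) w = 0"
  proof (rule winding_number_zero_outside[OF path_circ convex_cball])
    show "pathfinish (circ m 1) = pathstart (circ m 1)"
      by (simp add: pathfinish_def pathstart_def circ_0 circ_1)
    show "w \<notin> cball (cen m) (1 / real m)"
    proof
      assume "w \<in> cball (cen m) (1 / real m)"
      then have "sqrt ((y - 1 / real m)^2) \<le> 1 / real m" by (simp add: dist_cen w_def)
      then have "\<bar>y - 1 / real m\<bar> \<le> 1 / real m" by simp
      then show False using a b unfolding y_def by linarith
    qed
    show "path_image (circ m 1) \<subseteq> cball (cen m) (1 / real m)"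
      using circ_sphere[OF m1] by (auto simp: path_image_def)
  qed
  moreover have "winding_number (circ n 1) w = 1"
  proof -
    have nw: "norm (w - cen n) < 1 / real n"
    proof -
      have "norm (w - cen n) = dist (cen n) w" by (simp add: dist_norm norm_minus_commute)
      also have "\<dots> = \<bar>y - 1 / real n\<bar>" by (simp add: dist_cen w_def)
      also have "\<dots> = 1 / real (n + 1)" using yp by (simp add: y_def)
      finally show ?thesis using a by simp
    qed
    have "w \<notin> path_image (circlepath (cen n) (1 / real n))"
      using nw by (simp add: dist_norm norm_minus_commute)
    then have "winding_number (shiftpath (3/4) (circlepath (cen n) (1 / real n))) w
           = winding_number (circlepath (cen n) (1 / real n)) w"
      by (intro winding_number_shiftpath) auto
    also have "\<dots> = 1" using nw by (rule winding_number_circlepath)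
    finally show ?thesis by (simp add: circ_shift)
  qed
  ultimately show False using eqw by simp
qed

theorem lemma12p1:
  shows "countable P_omega \<and> infinite P_omega"
proof
  show "countable P_omega" by (rule P_countable)
  define cl where "cl = (\<lambda>g. {h. homotopic_paths hawaiian_earring g h})"
  have sub: "(\<lambda>n. cl (pr2 \<circ> circ n 1)) ` {1..} \<subseteq> P_omega"
    unfolding P_omega_def cl_def
    using ell_omega omega_generated.gen by auto
  have refl: "(pr2 \<circ> circ n 1) \<in> cl (pr2 \<circ> circ n 1)" if "n \<ge> 1" for n
    using ell_omega[OF that] unfolding cl_def omega_loop_def by (simp add: homotopic_paths_refl)
  have "inj_on (\<lambda>n. cl (pr2 \<circ> circ n 1)) {1..}"
  proof (rule inj_onI)
    fix n m :: nat assume n: "n \<in> {1..}" and m: "m \<in> {1..}" and eq: "cl (pr2 \<circ> circ n 1) = cl (pr2 \<circ> circ m 1)"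
    show "n = m"
    proof (rule ccontr)
      assume "n \<noteq> m"
      then consider "n < m" | "m < n" by linarith
      then show False
      proof cases
        case 1
        have "pr2 \<circ> circ m 1 \<in> cl (pr2 \<circ> circ n 1)" using eq refl m by auto
        then show False using distinct_ell[OF _ 1] n by (simp add: cl_def)
      next
        case 2
        have "pr2 \<circ> circ n 1 \<in> cl (pr2 \<circ> circ m 1)" using eq refl n by auto
        then show False using distinct_ell[OF _ 2] m by (simp add: cl_def)
      qed
    qed
  qed
  then have "infinite ((\<lambda>n. cl (pr2 \<circ> circ n 1)) ` {1..})"
    using finite_imageD infinite_Ici by blast
  then show "infinite P_omega" using sub finite_subset by blast
qed


end
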